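(* Let $p\in(0,1)$, $\gamma>0$, $B>0$, $w\in\mathbb{N}$, for each $N\in\mathbb{N}$ let $(\xi_j^{(N)*})_{j=1}^N$ be the unique maximizer of $\mathcal{T}_N$, and let $B^{(N)}=B-\sum_{i=1}^N\xi_i^{(N)*}$. Then $\lim_{N\to\infty}B^{(N)}=0$.
   Context: Logarithms are base 2. For an admissible (nonnegative, with sum at most $B$) sequence $(x_j)_{j\ge1}$, $$\mathcal{T}_\infty(x_1,x_2,\dots)=\sum_{k=1}^{w}p^2(1-p)^{k-1}\frac{k}{2}\log_2\!\Big(1+\gamma\frac{B}{k}\Big)+\sum_{j=1}^{\infty}p(1-p)^{j+w-1}\frac12\log_2(1+\gamma x_j)+\sum_{k=1}^{\infty}p^2(1-p)^{k+w-1}\frac{w}{2}\log_2\!\Big(1+\gamma\frac{B-\sum_{j=1}^{k}x_j}{w}\Big).$$ For $N\in\mathbb{N}$ and $\xi_1,\dots,\xi_N\ge0$ with $\sum_{j=1}^N\xi_j\le B$, define $\mathcal{T}_N(\xi_1,\dots,\xi_N)=\mathcal{T}_\infty(\xi_1,\dots,\xi_N,0,0,\dots)$. $\mathcal{T}_N$ has a unique maximizer over this compact set, denoted $(\xi_j^{(N)*})_{j=1}^N$. *)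

theory Defs
  imports "HOL-Analysis.Analysis"
begin

text \<open>Sequences are functions nat => real; only indices j >= 1 are used (x 0 is ignored).\<close>

definition T_inf :: "real \<Rightarrow> real \<Rightarrow> real \<Rightarrow> nat \<Rightarrow> (nat \<Rightarrow> real) \<Rightarrow> real" where
  "T_inf p \<gamma> B w x =
     (\<Sum>k=1..w. p^2 * (1-p)^(k-1) * (real k / 2) * log 2 (1 + \<gamma> * B / real k))
   + (\<Sum>j. p * (1-p)^(Suc j + w - 1) * (1/2) * log 2 (1 + \<gamma> * x (Suc j)))
   + (\<Sum>k. p^2 * (1-p)^(Suc k + w - 1) * (real w / 2)
            * log 2 (1 + \<gamma> * (B - (\<Sum>j=1..Suc k. x j)) / real w))"

definition T_N :: "real \<Rightarrow> real \<Rightarrow> real \<Rightarrow> nat \<Rightarrow> nat \<Rightarrow> (nat \<Rightarrow> real) \<Rightarrow> real" where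
  "T_N p \<gamma> B w N \<xi> = T_inf p \<gamma> B w (\<lambda>j. if 1 \<le> j \<and> j \<le> N then \<xi> j else 0)"

definition feasible_N :: "real \<Rightarrow> nat \<Rightarrow> (nat \<Rightarrow> real) set" where
  "feasible_N B N = {\<xi>. (\<forall>j\<in>{1..N}. 0 \<le> \<xi> j) \<and> (\<Sum>j=1..N. \<xi> j) \<le> B}"

definition is_maximizer_N :: "real \<Rightarrow> real \<Rightarrow> real \<Rightarrow> nat \<Rightarrow> nat \<Rightarrow> (nat \<Rightarrow> real) \<Rightarrow> bool" where
  "is_maximizer_N p \<gamma> B w N \<xi> \<longleftrightarrow>
     \<xi> \<in> feasible_N B N \<and> (\<forall>\<eta>\<in>feasible_N B N. T_N p \<gamma> B w N \<eta> \<le> T_N p \<gamma> B w N \<xi>)"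

end

theory Submission
  imports Defs
begin

lemma summable_bnd:
  fixes f :: "nat \<Rightarrow> real"
  assumes "0 \<le> q" "q < 1" "\<And>k. 0 \<le> f k" "\<And>k. f k \<le> C * q^k"
  shows "summable f"
proof (rule summable_comparison_test)
  show "\<exists>N. \<forall>n\<ge>N. norm (f n) \<le> C * q^n" using assms(3,4) by auto
  show "summable (\<lambda>n. C * q^n)" using assms(1,2) by (intro summable_mult summable_geometric) simp
qed

lemma geom_tail_sums:
  fixes q :: real
  assumes "0 \<le> q" "q < 1"
  shows "(\<lambda>k. if m \<le> k then q^k else 0) sums (q^m / (1-q))"
proof -
  have "(\<lambda>i. q^m * q^i) sums (q^m * (1 / (1-q)))"
    using assms by (intro sums_mult geometric_sums) simp
  then have "(\<lambda>i. (\<lambda>k. if m \<le> k then q^k else 0) (i + m)) sums (q^m / (1-q))"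
    by (simp add: power_add mult.commute)
  then show ?thesis by (subst (asm) sums_zero_iff_shift) auto
qed

lemma log_diff_lower:
  assumes "0 < b" "b \<le> a"
  shows "log 2 a - log 2 b \<ge> (a - b) / (a * ln 2)"
proof -
  have "ln (b / a) \<le> b / a - 1" using assms by (intro ln_le_minus_one) simp
  then have "ln a - ln b \<ge> (a - b) / a" using assms by (simp add: ln_div field_simps)
  then have "(a - b) / a / ln 2 \<le> (ln a - ln b) / ln 2" by (intro divide_right_mono) auto
  then show ?thesis by (simp add: log_def diff_divide_distrib[symmetric])
qed

lemma log_diff_upper:
  assumes "0 < b" "b \<le> a"
  shows "log 2 a - log 2 b \<le> (a - b) / (b * ln 2)"
proof -
  have "ln (a / b) \<le> a / b - 1" using assms by (intro ln_le_minus_one) simp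
  then have "ln a - ln b \<le> (a - b) / b" using assms by (simp add: ln_div field_simps)
  then have "(ln a - ln b) / ln 2 \<le> (a - b) / b / ln 2" by (intro divide_right_mono) auto
  then show ?thesis by (simp add: log_def diff_divide_distrib[symmetric])
qed

lemma term_bnd:
  fixes u v q t T :: real
  assumes "0 \<le> u" "0 \<le> v" "0 \<le> q" "1 \<le> t" "t \<le> T"
  shows "0 \<le> u * q^(Suc k + w - 1) * v * log 2 t"
    and "u * q^(Suc k + w - 1) * v * log 2 t \<le> (u * q^w * v * log 2 T) * q^k"
proof -
  have l0: "0 \<le> log 2 t" using assms by simp
  have l1: "log 2 t \<le> log 2 T" using assms by simp
  show "0 \<le> u * q^(Suc k + w - 1) * v * log 2 t" using assms l0 by simp
  have "u * q^(Suc k + w - 1) * v * log 2 t = (u * q^w * v * q^k) * log 2 t"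
    by (simp add: power_add algebra_simps)
  also have "\<dots> \<le> (u * q^w * v * q^k) * log 2 T"
    using assms l1 by (intro mult_left_mono) auto
  finally show "u * q^(Suc k + w - 1) * v * log 2 t \<le> (u * q^w * v * log 2 T) * q^k"
    by (simp add: algebra_simps)
qed

lemma T_inf_increase:
  fixes p \<gamma> B M R \<delta> :: real and w j :: nat and X :: "nat \<Rightarrow> real"
  assumes p0: "0 < p" and p1: "p < 1" and g: "0 < \<gamma>" and w: "1 \<le> w" and d: "0 < \<delta>"
    and j: "1 \<le> j"
    and Xnn: "\<And>i. 0 \<le> X i" and XM: "\<And>i. X i \<le> M"
    and XS: "\<And>k. (\<Sum>i=1..k. X i) \<le> B - R"
    and dR: "\<delta> \<le> R"
    and key: "X j + \<delta> + \<delta> / w < R / w"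
  shows "T_inf p \<gamma> B w X < T_inf p \<gamma> B w (\<lambda>i. X i + (if i = j then \<delta> else 0))"
proof -
  define Y where "Y = (\<lambda>i. X i + (if i = j then \<delta> else 0))"
  define a where "a Z k = p * (1-p)^(Suc k + w - 1) * (1/2) * log 2 (1 + \<gamma> * Z (Suc k))" for Z k
  define b where "b Z k = p^2 * (1-p)^(Suc k + w - 1) * (real w / 2)
            * log 2 (1 + \<gamma> * (B - (\<Sum>i=1..Suc k. Z i)) / real w)" for Z k
  define C0 where "C0 = (\<Sum>k=1..w. p^2 * (1-p)^(k-1) * (real k / 2) * log 2 (1 + \<gamma> * B / real k))"
  have T: "T_inf p \<gamma> B w Z = C0 + suminf (a Z) + suminf (b Z)" for Z
    unfolding T_inf_def a_def b_def C0_def by simp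
  have wpos: "0 < real w" using w by simp
  have BR: "R \<le> B" using XS[of 0] by simp
  have M0: "0 \<le> M" using Xnn[of 0] XM[of 0] by simp
  have SY: "(\<Sum>i=1..n. Y i) = (\<Sum>i=1..n. X i) + (if j \<le> n then \<delta> else 0)" for n
    using j by (simp add: Y_def sum.distrib)
  have SX0: "0 \<le> (\<Sum>i=1..n. X i)" for n using Xnn by (simp add: sum_nonneg)
  have Ynn: "0 \<le> Y i" and YM: "Y i \<le> M + \<delta>" for i using Xnn[of i] XM[of i] d by (auto simp: Y_def)
  have q0: "0 \<le> 1 - p" and q1: "1 - p < 1" using p0 p1 by auto
  have suma: "summable (a Z)" if "\<And>i. 0 \<le> Z i" "\<And>i. Z i \<le> M + \<delta>" for Z
  proof (rule summable_bnd[OF q0 q1])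
    fix k
    have t1: "1 \<le> 1 + \<gamma> * Z (Suc k)" using g that(1)[of "Suc k"] by simp
    have t2: "1 + \<gamma> * Z (Suc k) \<le> 1 + \<gamma> * (M + \<delta>)" using g that(2)[of "Suc k"] by simp
    show "0 \<le> a Z k" unfolding a_def using term_bnd(1)[where u=p and v="1/2" and k=k and w=w, OF _ _ q0 t1 t2] p0 by simp
    show "a Z k \<le> (p * (1-p)^w * (1/2) * log 2 (1 + \<gamma> * (M + \<delta>))) * (1-p)^k"
      unfolding a_def using term_bnd(2)[where u=p and v="1/2" and k=k and w=w, OF _ _ q0 t1 t2] p0 by simp
  qed
  have sumb: "summable (b Z)" if "\<And>n. 0 \<le> (\<Sum>i=1..n. Z i)" "\<And>n. (\<Sum>i=1..n. Z i) \<le> B" for Z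
  proof (rule summable_bnd[OF q0 q1])
    fix k
    have t1: "1 \<le> 1 + \<gamma> * (B - (\<Sum>i=1..Suc k. Z i)) / real w"
      using g that(2)[of "Suc k"] wpos by simp
    have t2: "1 + \<gamma> * (B - (\<Sum>i=1..Suc k. Z i)) / real w \<le> 1 + \<gamma> * B / real w"
      using g that(1)[of "Suc k"] wpos by (simp add: divide_right_mono)
    show "0 \<le> b Z k" unfolding b_def using term_bnd(1)[where u="p^2" and v="real w/2" and k=k and w=w, OF _ _ q0 t1 t2] p0 by simp
    show "b Z k \<le> (p^2 * (1-p)^w * (real w / 2) * log 2 (1 + \<gamma> * B / real w)) * (1-p)^k"
      unfolding b_def using term_bnd(2)[where u="p^2" and v="real w/2" and k=k and w=w, OF _ _ q0 t1 t2] p0 by simp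
  qed
  have saX: "summable (a X)" using suma Xnn XM d by (meson add_increasing2 less_imp_le)
  have saY: "summable (a Y)" using suma Ynn YM by blast
  have sbX: "summable (b X)"
  proof (rule sumb)
    fix n show "0 \<le> (\<Sum>i=1..n. X i)" by (rule SX0)
    show "(\<Sum>i=1..n. X i) \<le> B" using XS[of n] dR d by simp
  qed
  have sbY: "summable (b Y)"
  proof (rule sumb)
    fix n show "0 \<le> (\<Sum>i=1..n. Y i)" using SY[of n] SX0[of n] d by simp
    show "(\<Sum>i=1..n. Y i) \<le> B" using SY[of n] XS[of n] dR d by simp
  qed
  define P where "P = p * (1-p)^(j - 1 + w)"
  have P0: "0 < P" using p0 p1 by (simp add: P_def)
  define a1 where "a1 = 1 + \<gamma> * (X j + \<delta>)"
  define b2 where "b2 = 1 + \<gamma> * (R - \<delta>) / real w"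
  have a1p: "0 < a1" using g Xnn[of j] d by (simp add: a1_def add_pos_nonneg)
  have b2p: "1 \<le> b2" using g dR wpos by (simp add: b2_def)
  have a1b2: "a1 < b2"
  proof -
    have "X j + \<delta> < (R - \<delta>) / real w" using key by (simp add: diff_divide_distrib)
    then have "\<gamma> * (X j + \<delta>) < \<gamma> * ((R - \<delta>) / real w)" using g by (rule mult_strict_left_mono)
    then show ?thesis by (simp add: a1_def b2_def)
  qed
  define G where "G = a Y (j - 1) - a X (j - 1)"
  have adiff: "(\<lambda>k. a Y k - a X k) = (\<lambda>r. if r = j - 1 then (\<lambda>k. a Y k - a X k) r else 0)"
  proof
    fix k show "a Y k - a X k = (if k = j - 1 then a Y k - a X k else 0)"
      using j by (auto simp: a_def Y_def)
  qed
  have Ga: "suminf (a Y) - suminf (a X) = G"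
  proof -
    have "suminf (a Y) - suminf (a X) = (\<Sum>k. a Y k - a X k)" by (rule suminf_diff[OF saY saX])
    also have "\<dots> = G" unfolding G_def by (subst adiff) (rule sums_unique[symmetric, OF sums_single])
    finally show ?thesis .
  qed
  have Glow: "G \<ge> P * ((1/2) * ((\<gamma> * \<delta>) / (a1 * ln 2)))"
  proof -
    have e: "Suc (j - 1) = j" "Suc (j - 1) + w - 1 = j - 1 + w" using j by auto
    have G': "G = P * ((1/2) * (log 2 a1 - log 2 (1 + \<gamma> * X j)))"
      unfolding G_def a_def P_def a1_def Y_def e using j by (simp add: algebra_simps Suc_diff_le)
    have "log 2 a1 - log 2 (1 + \<gamma> * X j) \<ge> (a1 - (1 + \<gamma> * X j)) / (a1 * ln 2)"
      using g Xnn[of j] d by (intro log_diff_lower) (auto simp: a1_def add_pos_nonneg)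
    moreover have "a1 - (1 + \<gamma> * X j) = \<gamma> * \<delta>" by (simp add: a1_def algebra_simps)
    ultimately show ?thesis unfolding G' using P0 by (intro mult_left_mono) auto
  qed
  define K where "K = real w / 2 * ((\<gamma> * \<delta> / real w) / (b2 * ln 2))"
  have bdiff: "b X k - b Y k \<le> p^2 * (1-p)^w * K * (if j - 1 \<le> k then (1-p)^k else 0)" for k
  proof (cases "j - 1 \<le> k")
    case False
    then have "\<not> j \<le> Suc k" by simp
    then have "(\<Sum>i=1..Suc k. Y i) = (\<Sum>i=1..Suc k. X i)" using SY[of "Suc k"] by simp
    then have "b X k = b Y k" unfolding b_def by simp
    then show ?thesis using False by simp
  next
    case True
    then have jk: "j \<le> Suc k" by simp
    define S where "S = (\<Sum>i=1..Suc k. X i)"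
    define aa where "aa = 1 + \<gamma> * (B - S) / real w"
    define bb where "bb = 1 + \<gamma> * (B - (S + \<delta>)) / real w"
    have RS: "R \<le> B - S" using XS[of "Suc k"] by (simp add: S_def)
    have bbb2: "b2 \<le> bb" using RS g wpos unfolding b2_def bb_def
      by (intro add_left_mono divide_right_mono mult_left_mono) auto
    have bbp: "0 < bb" using bbb2 b2p by simp
    have abd: "aa - bb = \<gamma> * \<delta> / real w" unfolding aa_def bb_def by (simp add: diff_divide_distrib[symmetric] algebra_simps)
    have "0 \<le> \<gamma> * \<delta> / real w" using g d wpos by simp
    then have bba: "bb \<le> aa" using abd by simp
    have "log 2 aa - log 2 bb \<le> (aa - bb) / (bb * ln 2)" by (rule log_diff_upper[OF bbp bba])
    also have "\<dots> \<le> (aa - bb) / (b2 * ln 2)"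
      using abd g d wpos b2p bbb2 by (intro divide_left_mono mult_right_mono) auto
    finally have L: "log 2 aa - log 2 bb \<le> (\<gamma> * \<delta> / real w) / (b2 * ln 2)" using abd by simp
    have "b X k - b Y k = (p^2 * (1-p)^w * (1-p)^k) * (real w / 2 * (log 2 aa - log 2 bb))"
      unfolding b_def SY aa_def bb_def S_def using jk by (simp add: power_add algebra_simps)
    also have "\<dots> \<le> (p^2 * (1-p)^w * (1-p)^k) * K"
      unfolding K_def using L q0 by (intro mult_left_mono) auto
    finally show ?thesis using True by (simp add: mult_ac)
  qed
  have tail: "(\<lambda>k. p^2 * (1-p)^w * K * (if j - 1 \<le> k then (1-p)^k else 0))
      sums (p^2 * (1-p)^w * K * ((1-p)^(j-1) / (1 - (1-p))))"
    by (intro sums_mult geom_tail_sums q0 q1)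
  have Bb: "suminf (b X) - suminf (b Y) \<le> P * K"
  proof -
    have "suminf (b X) - suminf (b Y) = (\<Sum>k. b X k - b Y k)" by (rule suminf_diff[OF sbX sbY])
    also have "\<dots> \<le> p^2 * (1-p)^w * K * ((1-p)^(j-1) / (1 - (1-p)))"
      by (rule sums_le[OF _ summable_sums[OF summable_diff[OF sbX sbY]] tail]) (rule bdiff)
    also have "\<dots> = P * K" using p0 by (simp add: P_def power_add power2_eq_square field_simps)
    finally show ?thesis .
  qed
  have KG: "K < (1/2) * ((\<gamma> * \<delta>) / (a1 * ln 2))"
  proof -
    have K': "K = (1/2) * ((\<gamma> * \<delta>) / (b2 * ln 2))" unfolding K_def using wpos by simp
    have "(\<gamma> * \<delta>) / (b2 * ln 2) < (\<gamma> * \<delta>) / (a1 * ln 2)"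
      using g d a1p a1b2 by (intro divide_strict_left_mono mult_strict_right_mono) auto
    then show ?thesis unfolding K' by (rule mult_strict_left_mono) simp
  qed
  have "T_inf p \<gamma> B w Y - T_inf p \<gamma> B w X = G - (suminf (b X) - suminf (b Y))"
    using Ga by (simp add: T)
  moreover have "P * K < P * ((1/2) * ((\<gamma> * \<delta>) / (a1 * ln 2)))"
    using KG P0 by (rule mult_strict_left_mono)
  ultimately show ?thesis using Glow Bb unfolding Y_def by linarith
qed

lemma maximizer_lower:
  fixes p \<gamma> B :: real and w N :: nat and \<xi> :: "nat \<Rightarrow> real"
  assumes p0: "0 < p" and p1: "p < 1" and g: "0 < \<gamma>" and B0: "0 < B" and w: "1 \<le> w"
    and mx: "is_maximizer_N p \<gamma> B w N \<xi>" and iN: "i \<in> {1..N}"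
  shows "(B - (\<Sum>k=1..N. \<xi> k)) / real w \<le> \<xi> i"
proof (rule ccontr)
  assume neg: "\<not> ?thesis"
  define R where "R = B - (\<Sum>k=1..N. \<xi> k)"
  have feas: "\<xi> \<in> feasible_N B N" and opt: "\<And>\<eta>. \<eta> \<in> feasible_N B N \<Longrightarrow> T_N p \<gamma> B w N \<eta> \<le> T_N p \<gamma> B w N \<xi>"
    using mx unfolding is_maximizer_N_def by auto
  have nn: "\<And>k. k \<in> {1..N} \<Longrightarrow> 0 \<le> \<xi> k" and sB: "(\<Sum>k=1..N. \<xi> k) \<le> B"
    using feas unfolding feasible_N_def by auto
  have wpos: "0 < real w" using w by simp
  have lt: "\<xi> i < R / real w" using neg R_def by simp
  have Rpos: "0 < R" using lt nn[OF iN] wpos by (smt (verit) divide_nonpos_pos)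
  define \<delta> where "\<delta> = (R / real w - \<xi> i) / 3"
  have d: "0 < \<delta>" using lt by (simp add: \<delta>_def)
  have dw: "\<delta> / real w \<le> \<delta>" using d w by (simp add: divide_le_eq)
  have Rw: "R / real w \<le> R" using Rpos w by (simp add: divide_le_eq)
  define X where "X = (\<lambda>k. if 1 \<le> k \<and> k \<le> N then \<xi> k else 0)"
  define \<eta> where "\<eta> = (\<lambda>k. \<xi> k + (if k = i then \<delta> else 0))"
  have Xnn: "0 \<le> X k" for k using nn by (simp add: X_def)
  have XM: "X k \<le> B" for k
  proof (cases "k \<in> {1..N}")
    case True
    then have "\<xi> k \<le> (\<Sum>k=1..N. \<xi> k)" using nn by (intro member_le_sum) auto
    then show ?thesis using True sB by (simp add: X_def)
  next
    case False then show ?thesis using B0 by (auto simp: X_def)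
  qed
  have XS: "(\<Sum>i=1..k. X i) \<le> B - R" for k
  proof (cases "k \<le> N")
    case True
    have "(\<Sum>i=1..k. X i) = (\<Sum>i=1..k. \<xi> i)" using True by (intro sum.cong) (auto simp: X_def)
    also have "\<dots> \<le> (\<Sum>i=1..N. \<xi> i)" using True nn by (intro sum_mono2) auto
    finally show ?thesis by (simp add: R_def)
  next
    case False
    have "(\<Sum>i=1..k. X i) = (\<Sum>i=1..N. X i)" using False
      by (intro sum.mono_neutral_right) (auto simp: X_def)
    also have "\<dots> = (\<Sum>i=1..N. \<xi> i)" by (intro sum.cong) (auto simp: X_def)
    finally show ?thesis by (simp add: R_def)
  qed
  have Xi: "X i = \<xi> i" using iN by (simp add: X_def)
  have key: "X i + \<delta> + \<delta> / real w < R / real w" proof -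
    have "R / real w - \<xi> i = 3 * \<delta>" by (simp add: \<delta>_def)
    then show ?thesis using dw d Xi by linarith
  qed
  have dR: "\<delta> \<le> R" using Rw lt nn[OF iN] by (simp add: \<delta>_def)
  have i1: "1 \<le> i" using iN by simp
  have inc: "T_inf p \<gamma> B w X < T_inf p \<gamma> B w (\<lambda>k. X k + (if k = i then \<delta> else 0))"
    by (rule T_inf_increase[OF p0 p1 g w d i1 Xnn XM XS dR key])
  have ext: "(\<lambda>k. if 1 \<le> k \<and> k \<le> N then \<eta> k else 0) = (\<lambda>k. X k + (if k = i then \<delta> else 0))"
    using iN by (auto simp: X_def \<eta>_def)
  have "T_N p \<gamma> B w N \<xi> < T_N p \<gamma> B w N \<eta>"
    unfolding T_N_def ext using inc by (simp add: X_def)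
  moreover have "\<eta> \<in> feasible_N B N"
  proof -
    have "(\<Sum>k=1..N. \<eta> k) = (\<Sum>k=1..N. \<xi> k) + \<delta>" using iN by (simp add: \<eta>_def sum.distrib)
    then have "(\<Sum>k=1..N. \<eta> k) \<le> B" using dR by (simp add: R_def)
    moreover have "\<forall>k\<in>{1..N}. 0 \<le> \<eta> k" using nn d by (simp add: \<eta>_def)
    ultimately show ?thesis by (simp add: feasible_N_def)
  qed
  ultimately show False using opt by fastforce
qed

theorem corollary3:
  fixes p \<gamma> B :: real and w :: nat and \<xi> :: "nat \<Rightarrow> nat \<Rightarrow> real"
  assumes "0 < p" and "p < 1" and "0 < \<gamma>" and "0 < B" and "1 \<le> w"
    and "\<And>N. 1 \<le> N \<Longrightarrow> is_maximizer_N p \<gamma> B w N (\<xi> N)"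
  shows "(\<lambda>N. B - (\<Sum>i=1..N. \<xi> N i)) \<longlonglongrightarrow> 0"
proof (rule tendsto_sandwich[where f="\<lambda>_. 0" and h="\<lambda>N. (real w * B) / real N"])
  have wpos: "0 < real w" using assms(5) by simp
  have bnd: "0 \<le> B - (\<Sum>i=1..N. \<xi> N i) \<and> B - (\<Sum>i=1..N. \<xi> N i) \<le> (real w * B) / real N"
    if N: "1 \<le> N" for N
  proof -
    define R where "R = B - (\<Sum>i=1..N. \<xi> N i)"
    have mx: "is_maximizer_N p \<gamma> B w N (\<xi> N)" using assms(6) N by blast
    have nn: "\<And>k. k \<in> {1..N} \<Longrightarrow> 0 \<le> \<xi> N k" and sB: "(\<Sum>k=1..N. \<xi> N k) \<le> B"
      using mx unfolding is_maximizer_N_def feasible_N_def by auto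
    have lo: "\<And>k. k \<in> {1..N} \<Longrightarrow> R / real w \<le> \<xi> N k"
      unfolding R_def using maximizer_lower[OF assms(1-5) mx] by blast
    have "(\<Sum>k=1..N. R / real w) \<le> (\<Sum>k=1..N. \<xi> N k)" using lo by (rule sum_mono)
    then have "real N * (R / real w) \<le> B - R" by (simp add: R_def)
    moreover have R0: "0 \<le> R" using sB by (simp add: R_def)
    ultimately have "real N * (R / real w) \<le> B" by linarith
    then have "real N * R \<le> real w * B" using wpos by (simp add: field_simps)
    then have "R \<le> (real w * B) / real N" using N by (simp add: field_simps)
    then show ?thesis using R0 by (simp add: R_def)
  qed
  show "\<forall>\<^sub>F n in sequentially. 0 \<le> B - (\<Sum>i=1..n. \<xi> n i)"
    using bnd by (intro eventually_sequentiallyI[of 1]) blast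
  show "\<forall>\<^sub>F n in sequentially. B - (\<Sum>i=1..n. \<xi> n i) \<le> real w * B / real n"
    using bnd by (intro eventually_sequentiallyI[of 1]) blast
  show "(\<lambda>n. 0) \<longlonglongrightarrow> (0::real)" by simp
  show "(\<lambda>n. real w * B / real n) \<longlonglongrightarrow> 0" by (rule lim_const_over_n)
qed

end
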